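(* Let $\mathcal{A}=\{1,\dots,K\}$ with $K\ge2$, $a^*\in\mathcal{A}$, $\sigma>0$, $\delta>0$, and for each $a\in\mathcal{A}$ let $m_a\ge1$ and $\vec{y}_a\in\mathbb{R}^{m_a}$. For $\{\vec{\epsilon}_a\}_{a\in\mathcal{A}}$ with $\vec{\epsilon}_a\in\mathbb{R}^{m_a}$ let $\tilde{\mu}_a=(\vec{y}_a+\vec{\epsilon}_a)^T\mathbf{1}/m_a$. Then the set of all $\{\vec{\epsilon}_a\}_{a\in\mathcal{A}}$ satisfying $$\sum_{a\neq a^*}\Phi\!\left(\frac{\tilde{\mu}_a-\tilde{\mu}_{a^*}}{\sigma^3\sqrt{1/m_a+1/m_{a^*}}}\right)\le\delta\quad\text{and}\quad \tilde{\mu}_a-\tilde{\mu}_{a^*}\le0\ \ \forall a\neq a^*$$ is convex.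
   Context: $\Phi$ denotes the standard normal cumulative distribution function and $\mathbf{1}$ the all-ones vector. Here $\vec{y}_a$ are the rewards collected from arm $a$ in an offline batch and $\vec{\epsilon}_a$ is the attacker's additive poisoning of them, so $\tilde{\mu}_a$ is the post-attack empirical mean. *)

theory Defs
  imports "HOL-Probability.Probability"
begin

definition Phi :: "real \<Rightarrow> real" where
  "Phi x = measure (density lborel std_normal_density) {..x}"

definition mu_tilde :: "(nat \<Rightarrow> nat) \<Rightarrow> (nat \<Rightarrow> nat \<Rightarrow> real) \<Rightarrow> (nat \<Rightarrow> nat \<Rightarrow> real) \<Rightarrow> nat \<Rightarrow> real" where
  "mu_tilde m y e a = (\<Sum>i<m a. y a i + e a i) / real (m a)"

text \<open>A family {e_a} with e_a in R^(m a), a in {1..K}, represented extensionally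
  (zero outside the valid index range).\<close>
definition attack_space :: "nat \<Rightarrow> (nat \<Rightarrow> nat) \<Rightarrow> (nat \<Rightarrow> nat \<Rightarrow> real) set" where
  "attack_space K m = {e. \<forall>a i. (a \<notin> {1..K} \<or> i \<ge> m a) \<longrightarrow> e a i = 0}"

text \<open>Convexity of a set of families (pointwise convex combinations), i.e. the
  unfolding of the library notion convex for this function space.\<close>
definition convex_fam :: "(nat \<Rightarrow> nat \<Rightarrow> real) set \<Rightarrow> bool" where
  "convex_fam S \<longleftrightarrow> (\<forall>x\<in>S. \<forall>y\<in>S. \<forall>u\<ge>0. \<forall>v\<ge>0. u + v = 1 \<longrightarrow>
      (\<lambda>a i. u * x a i + v * y a i) \<in> S)"

end

theory Submission
  imports Defs
begin

lemma Phi_int: "Phi z = (LINT t:{..z}|lborel. std_normal_density t)"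
proof -
  have "Phi z = integral\<^sup>L (density lborel std_normal_density) (indicator {..z})"
    unfolding Phi_def by simp
  also have "\<dots> = (LINT t|lborel. std_normal_density t *\<^sub>R indicator {..z} t)"
    by (rule integral_density) auto
  finally show ?thesis by (simp add: set_lebesgue_integral_def mult.commute)
qed
lemma intg: "integrable lborel std_normal_density"
  using integrable_std_normal_moment[of 0] by simp
lemma sint: "set_integrable lborel A std_normal_density" if "A \<in> sets borel"
  unfolding set_integrable_def using that intg by (intro integrable_mult_indicator) auto
lemma Phi_diff: assumes "x \<le> y" shows "Phi y = Phi x + integral {x..y} std_normal_density"
proof -
  have e: "{..y} = {..x} \<union> {x<..y}" using assms by auto
  have "Phi y = Phi x + (LINT t:{x<..y}|lborel. std_normal_density t)"
    unfolding Phi_int e by (rule set_integral_Un) (auto intro: sint)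
  also have "(LINT t:{x<..y}|lborel. std_normal_density t) = integral {x<..y} std_normal_density"
    by (rule set_borel_integral_eq_integral(2)) (simp add: sint)
  also have "\<dots> = integral {x..y} std_normal_density"
    by (rule integral_spike_set [OF empty_imp_negligible negligible_subset [OF negligible_sing [of x]]]) auto
  finally show ?thesis .
qed

lemma Phi_deriv: "(Phi has_real_derivative std_normal_density x) (at x)"
proof -
  have c: "continuous_on {x-1..x+1} std_normal_density"
    unfolding normal_density_def by (intro continuous_intros) auto
  have i: "((\<lambda>t. integral {x-1..t} std_normal_density) has_real_derivative std_normal_density x) (at x within {x-1..x+1})"
    by (rule integral_has_real_derivative[OF c]) simp
  have "((\<lambda>t. Phi (x-1) + integral {x-1..t} std_normal_density) has_real_derivative 0 + std_normal_density x) (at x within {x-1..x+1})"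
    by (rule DERIV_add[OF DERIV_const i])
  then have d0: "((\<lambda>t. Phi (x-1) + integral {x-1..t} std_normal_density) has_real_derivative std_normal_density x) (at x within {x-1..x+1})"
    by simp
  have d: "((\<lambda>t. Phi (x-1) + integral {x-1..t} std_normal_density) has_real_derivative std_normal_density x) (at x within {x-1<..<x+1})"
    by (rule has_field_derivative_subset[OF d0]) auto
  have o: "open {x-1<..<x+1}" by simp
  have "at x within {x-1<..<x+1} = at x" by (rule at_within_open) auto
  with d have "((\<lambda>t. Phi (x-1) + integral {x-1..t} std_normal_density) has_real_derivative std_normal_density x) (at x)"
    by simp
  then show ?thesis
  proof (rule has_field_derivative_transform_within_open[OF _ o])
    show "x \<in> {x-1<..<x+1}" by simp
    fix t :: real assume "t \<in> {x-1<..<x+1}"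
    then have "x - 1 \<le> t" by simp
    then show "Phi (x-1) + integral {x-1..t} std_normal_density = Phi t"
      by (rule Phi_diff[symmetric])
  qed
qed

lemma Phi_convex: "convex_on {..0} Phi"
proof (rule convex_on_realI[where f'=std_normal_density])
  show "connected {..0::real}" by simp
  show "(Phi has_real_derivative std_normal_density x) (at x)" for x by (rule Phi_deriv)
  fix x y :: real assume "x \<in> {..0}" "y \<in> {..0}" "x \<le> y"
  then have "(-y) * (-y) \<le> (-x) * (-x)" by (intro mult_mono) auto
  then have "- y\<^sup>2 / 2 \<ge> - x\<^sup>2 / 2" by (simp add: power2_eq_square)
  then show "std_normal_density x \<le> std_normal_density y"
    unfolding std_normal_density_def by (intro mult_left_mono) auto
qed

lemma Phi_conv2:
  assumes "p \<le> 0" "q \<le> 0" "u \<ge> 0" "v \<ge> 0" "u + v = 1"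
  shows "Phi (u * p + v * q) \<le> u * Phi p + v * Phi q"
proof -
  have "Phi ((1 - v) *\<^sub>R p + v *\<^sub>R q) \<le> (1 - v) * Phi p + v * Phi q"
    by (rule convex_onD[OF Phi_convex]) (use assms in auto)
  moreover have "1 - v = u" using assms by simp
  ultimately show ?thesis by simp
qed

lemma mu_comb:
  assumes "u + v = 1"
  shows "mu_tilde m y (\<lambda>a i. u * e1 a i + v * e2 a i) a = u * mu_tilde m y e1 a + v * mu_tilde m y e2 a"
proof -
  have v: "v = 1 - u" using assms by simp
  have "(\<Sum>i<m a. y a i + (u * e1 a i + v * e2 a i)) = u * (\<Sum>i<m a. y a i + e1 a i) + v * (\<Sum>i<m a. y a i + e2 a i)"
    unfolding v by (simp add: sum_distrib_left sum.distrib algebra_simps sum_subtractf)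
  then show ?thesis unfolding mu_tilde_def by (simp add: add_divide_distrib)
qed

theorem proposition2:
  fixes K :: nat and astar :: nat and sigma delta :: real
    and m :: "nat \<Rightarrow> nat" and y :: "nat \<Rightarrow> nat \<Rightarrow> real"
  assumes "K \<ge> 2" and "astar \<in> {1..K}" and "sigma > 0" and "delta > 0"
    and "\<forall>a\<in>{1..K}. m a \<ge> 1"
  shows "convex_fam {e \<in> attack_space K m.
           (\<Sum>a\<in>{1..K} - {astar}.
              Phi ((mu_tilde m y e a - mu_tilde m y e astar) /
                   (sigma ^ 3 * sqrt (1 / real (m a) + 1 / real (m astar))))) \<le> delta
         \<and> (\<forall>a\<in>{1..K} - {astar}. mu_tilde m y e a - mu_tilde m y e astar \<le> 0)}"
  unfolding convex_fam_def
proof (intro ballI allI impI)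
  fix e1 e2 and u v :: real
  assume e1: "e1 \<in> {e \<in> attack_space K m.
           (\<Sum>a\<in>{1..K} - {astar}.
              Phi ((mu_tilde m y e a - mu_tilde m y e astar) /
                   (sigma ^ 3 * sqrt (1 / real (m a) + 1 / real (m astar))))) \<le> delta
         \<and> (\<forall>a\<in>{1..K} - {astar}. mu_tilde m y e a - mu_tilde m y e astar \<le> 0)}"
    and e2: "e2 \<in> {e \<in> attack_space K m.
           (\<Sum>a\<in>{1..K} - {astar}.
              Phi ((mu_tilde m y e a - mu_tilde m y e astar) /
                   (sigma ^ 3 * sqrt (1 / real (m a) + 1 / real (m astar))))) \<le> delta
         \<and> (\<forall>a\<in>{1..K} - {astar}. mu_tilde m y e a - mu_tilde m y e astar \<le> 0)}"
    and u: "u \<ge> 0" and v: "v \<ge> 0" and uv: "u + v = 1"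
  define z where "z = (\<lambda>a i. u * e1 a i + v * e2 a i)"
  define c where "c = (\<lambda>a. sigma ^ 3 * sqrt (1 / real (m a) + 1 / real (m astar)))"
  define D where "D = (\<lambda>e a. mu_tilde m y e a - mu_tilde m y e astar)"
  have Dz: "D z a = u * D e1 a + v * D e2 a" for a
    unfolding D_def z_def mu_comb[OF uv] by (simp add: algebra_simps)
  have cpos: "c a > 0" if "a \<in> {1..K}" for a
  proof -
    have "m a \<ge> 1" "m astar \<ge> 1" using assms(2,5) that by auto
    then have "1 / real (m a) + 1 / real (m astar) > 0" by (simp add: add_pos_pos)
    then show ?thesis unfolding c_def using assms(3) by simp
  qed
  have D1: "\<forall>a\<in>{1..K} - {astar}. D e1 a \<le> 0" and D2: "\<forall>a\<in>{1..K} - {astar}. D e2 a \<le> 0"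
    using e1 e2 unfolding D_def by auto
  have S1: "(\<Sum>a\<in>{1..K} - {astar}. Phi (D e1 a / c a)) \<le> delta"
   and S2: "(\<Sum>a\<in>{1..K} - {astar}. Phi (D e2 a / c a)) \<le> delta"
    using e1 e2 unfolding D_def c_def by auto
  have "(\<Sum>a\<in>{1..K} - {astar}. Phi (D z a / c a))
      \<le> (\<Sum>a\<in>{1..K} - {astar}. u * Phi (D e1 a / c a) + v * Phi (D e2 a / c a))"
  proof (rule sum_mono)
    fix a assume a: "a \<in> {1..K} - {astar}"
    have ca: "c a > 0" using cpos a by auto
    have eq: "D z a / c a = u * (D e1 a / c a) + v * (D e2 a / c a)"
      unfolding Dz by (simp add: add_divide_distrib)
    have n: "D e1 a / c a \<le> 0" "D e2 a / c a \<le> 0"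
      using D1 D2 a ca by (auto intro: divide_nonpos_pos)
    show "Phi (D z a / c a) \<le> u * Phi (D e1 a / c a) + v * Phi (D e2 a / c a)"
      unfolding eq by (rule Phi_conv2[OF n u v uv])
  qed
  also have "\<dots> = u * (\<Sum>a\<in>{1..K} - {astar}. Phi (D e1 a / c a)) + v * (\<Sum>a\<in>{1..K} - {astar}. Phi (D e2 a / c a))"
    by (simp add: sum.distrib sum_distrib_left)
  also have "\<dots> \<le> u * delta + v * delta"
    using S1 S2 u v by (intro add_mono mult_left_mono) auto
  also have "\<dots> = delta" using uv by (metis distrib_right mult_1)
  finally have S: "(\<Sum>a\<in>{1..K} - {astar}. Phi (D z a / c a)) \<le> delta" .
  have Dzn: "\<forall>a\<in>{1..K} - {astar}. D z a \<le> 0"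
    using D1 D2 u v unfolding Dz by (auto intro!: add_nonpos_nonpos mult_nonneg_nonpos)
  have att: "z \<in> attack_space K m"
    using e1 e2 unfolding attack_space_def z_def by auto
  show "(\<lambda>a i. u * e1 a i + v * e2 a i) \<in> {e \<in> attack_space K m.
           (\<Sum>a\<in>{1..K} - {astar}.
              Phi ((mu_tilde m y e a - mu_tilde m y e astar) /
                   (sigma ^ 3 * sqrt (1 / real (m a) + 1 / real (m astar))))) \<le> delta
         \<and> (\<forall>a\<in>{1..K} - {astar}. mu_tilde m y e a - mu_tilde m y e astar \<le> 0)}"
    using att S Dzn unfolding z_def[symmetric] D_def c_def by simp
qed

end
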